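(* Let $N\ge1$, $0<s<1$, let $G$ be an Orlicz function satisfying hypothesis (H) below with $p=\mathrm{index}(G)$, and let $u\in C^1(\mathbb{R}^N)$. Then for every $x\in\mathbb{R}^N$, \begin{equation*} \liminf_{\delta\to0^+}\frac{p(1-s)}{G(\delta^{1-s})}\int_{B(x,\delta)}G\left(\frac{|u(x)-u(y)|}{|x-y|^{s}}\right)\frac{dy}{|x-y|^N}\ge K_{N,p}|\nabla u(x)|^{p}. \end{equation*}
   Context: An Orlicz function is a function $G:[0,\infty)\to[0,\infty)$ that is continuous, convex, increasing, with $G(0)=0$, satisfies $G(2t)\le \mathfrak{c}\,G(t)$ for all $t\ge0$ for some $\mathfrak{c}>2$, and $\lim_{t\to0^+}G(t)/t=0$. A positive measurable $F$ on $(0,\infty)$ is in $\mathcal{RV}_q(0)$ if $\lim_{t\to0^+}F(\lambda t)/F(t)=\lambda^q$ for all $\lambda>0$; $q$ is its index. Hypothesis (H): $G\in\mathcal{RV}_p(0)$ is a piecewise smooth Orlicz function, $G'\in\mathcal{RV}_{p-1}(0)$, and writing $G(t)=t^p\ell(t)$, $\ell(t)\ge c_\ell>0$ for all $t>0$. $K_{N,p}=\int_{\mathbb{S}^{N-1}}|w\cdot e|^p\,d\sigma(w)$ for any unit vector $e$. *)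

theory Defs
  imports "HOL-Analysis.Analysis"
begin

definition orlicz :: "(real \<Rightarrow> real) \<Rightarrow> bool" where
  "orlicz G \<longleftrightarrow>
     (\<forall>t\<ge>0. G t \<ge> 0) \<and>
     continuous_on {0..} G \<and>
     convex_on {0..} G \<and>
     mono_on {0..} G \<and>
     G 0 = 0 \<and>
     (\<exists>c>2. \<forall>t\<ge>0. G (2 * t) \<le> c * G t) \<and>
     ((\<lambda>t. G t / t) \<longlongrightarrow> 0) (at_right 0)"

definition regvar0 :: "real \<Rightarrow> (real \<Rightarrow> real) \<Rightarrow> bool" where
  "regvar0 q F \<longleftrightarrow>
     (\<forall>t>0. F t > 0) \<and>
     F \<in> borel_measurable (restrict_space lborel {0<..}) \<and>
     (\<forall>lam>0. ((\<lambda>t. F (lam * t) / F t) \<longlongrightarrow> lam powr q) (at_right 0))"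

definition hypH :: "(real \<Rightarrow> real) \<Rightarrow> real \<Rightarrow> bool" where
  "hypH G p \<longleftrightarrow>
     orlicz G \<and>
     regvar0 p G \<and>
     G piecewise_C1_differentiable_on {0<..} \<and>
     (\<exists>G' S. finite S \<and>
        (\<forall>t\<in>{0<..} - S. (G has_real_derivative G' t) (at t)) \<and>
        regvar0 (p - 1) G') \<and>
     (\<exists>c\<^sub>l>0. \<forall>t>0. G t / t powr p \<ge> c\<^sub>l)"

text \<open>Surface measure on the unit sphere S^{N-1}, defined (standardly) as the cone measure:
  sigma(A) = N * Lebesgue measure of {r w : 0 < r <= 1, w in A}.\<close>
definition sphere_measure :: "'a::euclidean_space measure" where
  "sphere_measure = measure_of (sphere 0 1) (sets (restrict_space lborel (sphere 0 1)))
     (\<lambda>A. ennreal (real DIM('a)) *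
            emeasure lborel {r *\<^sub>R w | r w. 0 < r \<and> r \<le> 1 \<and> w \<in> A})"

definition K_const :: "'a::euclidean_space itself \<Rightarrow> real \<Rightarrow> real" where
  "K_const _ p = (let e = (SOME b. b \<in> (Basis :: 'a set)) in
      integral\<^sup>L (sphere_measure :: 'a measure) (\<lambda>w. \<bar>w \<bullet> e\<bar> powr p))"

end

theory Submission
  imports Defs
begin


typedef (overloaded) ('a::euclidean_space) bidx = "Basis :: 'a set"
  using nonempty_Basis by blast

instance bidx :: (euclidean_space) finite
proof
  show "finite (UNIV :: 'a bidx set)"
    by (metis finite_Basis finite_imageI type_definition.Abs_image type_definition_bidx)
qed

instantiation bidx :: (euclidean_space) linorder
begin
definition less_eq_bidx :: "'a bidx \<Rightarrow> 'a bidx \<Rightarrow> bool" where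
  "less_eq_bidx x y \<longleftrightarrow> to_nat x \<le> to_nat y"
definition less_bidx :: "'a bidx \<Rightarrow> 'a bidx \<Rightarrow> bool" where
  "less_bidx x y \<longleftrightarrow> to_nat x < to_nat y"
instance
proof
  fix x y z :: "'a bidx"
  show "(x < y) = (x \<le> y \<and> \<not> y \<le> x)" by (auto simp: less_eq_bidx_def less_bidx_def)
  show "x \<le> x" by (simp add: less_eq_bidx_def)
  show "x \<le> y \<Longrightarrow> y \<le> z \<Longrightarrow> x \<le> z" by (simp add: less_eq_bidx_def)
  show "x \<le> y \<Longrightarrow> y \<le> x \<Longrightarrow> x = y"
    unfolding less_eq_bidx_def using inj_to_nat[where 'a="'a bidx"] by (simp add: inj_eq)
  show "x \<le> y \<or> y \<le> x" by (auto simp: less_eq_bidx_def)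
qed
end

instance bidx :: (euclidean_space) wellorder
proof
  fix P :: "'a bidx \<Rightarrow> bool" and a
  assume H: "\<And>x. (\<And>y. y < x \<Longrightarrow> P y) \<Longrightarrow> P x"
  show "P a"
    by (induct a rule: measure_induct_rule[where f=to_nat]) (rule H, simp add: less_bidx_def)
qed

definition vec_of :: "'a::euclidean_space \<Rightarrow> real^('a bidx)" where
  "vec_of z = (\<chi> i. z \<bullet> Rep_bidx i)"
definition of_vec :: "real^('a bidx) \<Rightarrow> 'a::euclidean_space" where
  "of_vec v = (\<Sum>i\<in>UNIV. (v$i) *\<^sub>R Rep_bidx i)"

lemma Rep_bidx_inner: "Rep_bidx i \<bullet> Rep_bidx j = (if i = j then 1 else 0)"
  using Rep_bidx[of i] Rep_bidx[of j] Rep_bidx_inject[of i j]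
  by (auto simp: inner_Basis)

lemma of_vec_inner: "of_vec v \<bullet> Rep_bidx i = v $ i"
  by (simp add: of_vec_def inner_sum_left Rep_bidx_inner if_distrib cong: if_cong)

lemma inner_of_vec: "z \<bullet> of_vec v = vec_of z \<bullet> v"
  by (simp add: of_vec_def vec_of_def inner_sum_right inner_vec_def mult.commute)

lemma sum_bidx: "(\<Sum>i\<in>UNIV. f (Rep_bidx i)) = (\<Sum>b\<in>(Basis::'a::euclidean_space set). f b)"
proof -
  have "(\<Sum>b\<in>(Basis::'a set). f b) = (\<Sum>b\<in>Rep_bidx ` UNIV. f b)"
    by (simp add: type_definition.Rep_range[OF type_definition_bidx])
  also have "\<dots> = (\<Sum>i\<in>UNIV. f (Rep_bidx i))"
    by (subst sum.reindex) (auto simp: inj_on_def Rep_bidx_inject)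
  finally show ?thesis by simp
qed

lemma of_vec_vec_of: "of_vec (vec_of z) = z"
proof -
  have "of_vec (vec_of z) = (\<Sum>i\<in>UNIV. (z \<bullet> Rep_bidx i) *\<^sub>R Rep_bidx i)"
    by (simp add: of_vec_def vec_of_def)
  also have "\<dots> = (\<Sum>b\<in>Basis. (z \<bullet> b) *\<^sub>R b)"
    by (rule sum_bidx)
  also have "\<dots> = z" by (rule euclidean_representation)
  finally show ?thesis .
qed

lemma vec_of_of_vec: "vec_of (of_vec v) = v"
  by (simp add: vec_of_def of_vec_inner vec_eq_iff)

lemma linear_of_vec: "linear of_vec"
  by (auto simp: linear_iff of_vec_def scaleR_add_left sum.distrib scaleR_sum_right)

lemma norm_of_vec: "norm (of_vec v) = norm v"
  by (simp add: norm_eq_sqrt_inner inner_of_vec vec_of_of_vec)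

lemma Basis_cart_eq: "(Basis :: (real^'n) set) = (\<lambda>i::'n. axis i 1) ` UNIV"
  by (auto simp: Basis_vec_def)

lemma prod_Basis_cart: "(\<Prod>b\<in>(Basis :: (real^'n::finite) set). f b) = (\<Prod>i\<in>UNIV. f (axis i 1))"
  unfolding Basis_cart_eq by (subst prod.reindex) (auto simp: inj_on_def axis_eq_axis)

lemma prod_bidx: "(\<Prod>i\<in>UNIV. f (Rep_bidx i)) = (\<Prod>b\<in>(Basis::'a::euclidean_space set). f b)"
proof -
  have "(\<Prod>b\<in>(Basis::'a set). f b) = (\<Prod>b\<in>Rep_bidx ` UNIV. f b)"
    by (simp add: type_definition.Rep_range[OF type_definition_bidx])
  also have "\<dots> = (\<Prod>i\<in>UNIV. f (Rep_bidx i))"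
    by (subst prod.reindex) (auto simp: inj_on_def Rep_bidx_inject)
  finally show ?thesis by simp
qed

lemma vec_of_inner_axis: "vec_of z \<bullet> axis i 1 = z \<bullet> Rep_bidx i"
  by (simp add: vec_of_def inner_axis)

lemma of_vec_continuous: "continuous_on UNIV of_vec"
  using linear_of_vec linear_continuous_on linear_conv_bounded_linear by blast

lemma of_vec_measurable[measurable]: "of_vec \<in> borel_measurable borel"
  using of_vec_continuous by (rule borel_measurable_continuous_onI)

lemma preimage_box: "of_vec -` box l u = box (vec_of l) (vec_of u)"
proof -
  have "of_vec v \<in> box l u \<longleftrightarrow> v \<in> box (vec_of l) (vec_of u)" for v
  proof -
    have "of_vec v \<in> box l u \<longleftrightarrow> (\<forall>b\<in>Basis. l \<bullet> b < of_vec v \<bullet> b \<and> of_vec v \<bullet> b < u \<bullet> b)"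
      by (simp add: mem_box)
    also have "\<dots> \<longleftrightarrow> (\<forall>i. l \<bullet> Rep_bidx i < of_vec v \<bullet> Rep_bidx i \<and> of_vec v \<bullet> Rep_bidx i < u \<bullet> Rep_bidx i)"
      by (metis Rep_bidx Rep_bidx_cases mem_Collect_eq)
    also have "\<dots> \<longleftrightarrow> v \<in> box (vec_of l) (vec_of u)"
      by (simp add: mem_box_cart of_vec_inner vec_of_def)
    finally show ?thesis .
  qed
  then show ?thesis by auto
qed

lemma lborel_of_vec: "distr lborel borel of_vec = (lborel :: 'a::euclidean_space measure)"
proof (rule lborel_eqI[symmetric])
  fix l u :: 'a
  assume le: "\<And>b. b \<in> Basis \<Longrightarrow> l \<bullet> b \<le> u \<bullet> b"
  have "emeasure (distr lborel borel of_vec) (box l u) = emeasure lborel (box (vec_of l) (vec_of u))"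
    by (simp add: emeasure_distr preimage_box)
  also have "\<dots> = (\<Prod>b\<in>Basis. (vec_of u - vec_of l) \<bullet> b)"
    using le Rep_bidx by (auto simp: emeasure_lborel_box_eq prod_Basis_cart vec_of_inner_axis Basis_cart_eq)
  also have "\<dots> = (\<Prod>i\<in>UNIV. (u - l) \<bullet> Rep_bidx i)"
    by (simp add: prod_Basis_cart inner_diff_left vec_of_inner_axis)
  also have "\<dots> = (\<Prod>b\<in>Basis. (u - l) \<bullet> b)"
    using prod_bidx[of "\<lambda>b. (u - l) \<bullet> b"] by simp
  finally show "emeasure (distr lborel borel of_vec) (box l u) = (\<Prod>b\<in>Basis. (u - l) \<bullet> b)" .
qed simp

lemma lborel_orth:
  fixes T :: "real^'n::{finite,wellorder} \<Rightarrow> real^'n::_"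
  assumes T: "orthogonal_transformation T"
  shows "distr lborel borel T = lborel"
proof (rule lborel_eqI[symmetric])
  have lin: "linear T" using T orthogonal_transformation_linear by blast
  have Tm[measurable]: "T \<in> borel_measurable borel"
    using lin linear_continuous_on linear_conv_bounded_linear borel_measurable_continuous_onI by blast
  fix l u :: "(real, 'n) vec"
  assume le: "\<And>b. b \<in> Basis \<Longrightarrow> l \<bullet> b \<le> u \<bullet> b"
  define T' where "T' = inv T"
  have T': "orthogonal_transformation T'" using T orthogonal_transformation_inv T'_def by blast
  have bij: "bij T" using T orthogonal_transformation_bij by blast
  have pre: "T -` box l u = T' ` box l u"
    using bij unfolding T'_def by (auto simp: bij_def surj_f_inv_f image_iff) (metis bij bij_inv_eq_iff)
  have lm: "box l u \<in> lmeasurable" by simp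
  have m1: "T' ` box l u \<in> lmeasurable" using measurable_orthogonal_image[OF T' lm] .
  have "T -` box l u \<in> sets borel" using Tm measurable_sets_borel[OF Tm, of "box l u"] by simp
  then have "emeasure lborel (T -` box l u) = emeasure lebesgue (T -` box l u)"
    by (simp add: emeasure_completion)
  also have "\<dots> = ennreal (measure lebesgue (T' ` box l u))"
    using m1 pre by (simp add: emeasure_eq_measure2)
  also have "\<dots> = ennreal (measure lebesgue (box l u))"
    using measure_orthogonal_image[OF T' lm] by simp
  also have "\<dots> = emeasure lborel (box l u)"
    using lm by (simp add: emeasure_eq_measure2 emeasure_completion)
  finally show "emeasure (distr lborel borel T) (box l u) = (\<Prod>b\<in>Basis. (u - l) \<bullet> b)"
    using le by (simp add: emeasure_distr emeasure_lborel_box_eq)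
qed simp


lemma norm_vec_of: "norm (vec_of z) = norm z"
  by (metis norm_of_vec of_vec_vec_of)

lemma inner_of_vec2: "of_vec x \<bullet> z = x \<bullet> vec_of z"
  by (metis inner_commute inner_of_vec)

lemma rot_invariant:
  fixes v w :: "'a::euclidean_space" and p :: real
  assumes "norm v = 1" "norm w = 1"
  shows "(\<integral>\<^sup>+ z. ennreal (\<bar>v \<bullet> z\<bar> powr p / norm z powr p) * indicator {0<..1} (norm z) \<partial>lborel)
       = (\<integral>\<^sup>+ z. ennreal (\<bar>w \<bullet> z\<bar> powr p / norm z powr p) * indicator {0<..1} (norm z) \<partial>lborel)"
proof -
  have gen: "(\<integral>\<^sup>+ z. ennreal (\<bar>v \<bullet> z\<bar> powr p / norm z powr p) * indicator {0<..1} (norm z) \<partial>lborel)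
     = (\<integral>\<^sup>+ x. ennreal (\<bar>vec_of v \<bullet> x\<bar> powr p / norm x powr p) * indicator {0<..1} (norm x) \<partial>lborel)"
    for v :: 'a
  proof -
    have "(\<integral>\<^sup>+ z. ennreal (\<bar>v \<bullet> z\<bar> powr p / norm z powr p) * indicator {0<..1} (norm z) \<partial>lborel)
      = (\<integral>\<^sup>+ z. ennreal (\<bar>v \<bullet> z\<bar> powr p / norm z powr p) * indicator {0<..1} (norm z) \<partial>(distr lborel borel of_vec))"
      by (simp only: lborel_of_vec)
    also have "\<dots> = (\<integral>\<^sup>+ x. ennreal (\<bar>v \<bullet> of_vec x\<bar> powr p / norm (of_vec x) powr p) * indicator {0<..1} (norm (of_vec x)) \<partial>lborel)"
      by (subst nn_integral_distr) auto
    also have "\<dots> = (\<integral>\<^sup>+ x. ennreal (\<bar>vec_of v \<bullet> x\<bar> powr p / norm x powr p) * indicator {0<..1} (norm x) \<partial>lborel)"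
      by (simp add: norm_of_vec inner_of_vec)
    finally show ?thesis .
  qed
  have "norm (vec_of w) = norm (vec_of v)" using assms by (simp add: norm_vec_of)
  then obtain T where T: "orthogonal_transformation T" "T (vec_of w) = vec_of v"
    using orthogonal_transformation_exists by metis
  have lin: "linear T" using T orthogonal_transformation_linear by blast
  have Tm[measurable]: "T \<in> borel_measurable borel"
    using lin linear_continuous_on linear_conv_bounded_linear borel_measurable_continuous_onI by blast
  have "(\<integral>\<^sup>+ x. ennreal (\<bar>vec_of v \<bullet> x\<bar> powr p / norm x powr p) * indicator {0<..1} (norm x) \<partial>lborel)
     = (\<integral>\<^sup>+ x. ennreal (\<bar>vec_of v \<bullet> x\<bar> powr p / norm x powr p) * indicator {0<..1} (norm x) \<partial>(distr lborel borel T))"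
    by (simp only: lborel_orth[OF T(1)])
  also have "\<dots> = (\<integral>\<^sup>+ x. ennreal (\<bar>vec_of v \<bullet> T x\<bar> powr p / norm (T x) powr p) * indicator {0<..1} (norm (T x)) \<partial>lborel)"
    by (subst nn_integral_distr) auto
  also have "\<dots> = (\<integral>\<^sup>+ x. ennreal (\<bar>vec_of w \<bullet> x\<bar> powr p / norm x powr p) * indicator {0<..1} (norm x) \<partial>lborel)"
    using T by (simp add: orthogonal_transformation_norm orthogonal_transformation_def flip: T(2))
  finally show ?thesis using gen[of v] gen[of w] by simp
qed



lemma sphere_nn:
  fixes h :: "'a::euclidean_space \<Rightarrow> ennreal"
  assumes hm[measurable]: "h \<in> borel_measurable borel"
  shows "(\<integral>\<^sup>+ w. h w \<partial>(sphere_measure :: 'a measure))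
       = ennreal (real DIM('a)) * (\<integral>\<^sup>+ z. h (z /\<^sub>R norm z) * indicator {0<..1} (norm z) \<partial>lborel)"
proof -
  define e0 :: 'a where "e0 = (SOME b. b \<in> Basis)"
  have e0B: "e0 \<in> Basis" unfolding e0_def by (rule someI_ex) (use nonempty_Basis in blast)
  have ne0: "norm e0 = 1" using e0B by simp
  define \<nu> :: "'a \<Rightarrow> 'a" where "\<nu> z = (if z = 0 then e0 else z /\<^sub>R norm z)" for z
  define R :: "'a measure" where "R = restrict_space lborel (sphere 0 1)"
  define D :: "'a measure" where "D = density lborel (\<lambda>z. ennreal (real DIM('a)) * indicator {0<..1} (norm z))"
  define M0 where "M0 = distr D R \<nu>"
  have \<nu>b[measurable]: "\<nu> \<in> borel_measurable borel"
    unfolding \<nu>_def by measurable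
  have \<nu>sph: "\<nu> z \<in> sphere 0 1" for z
    using ne0 by (auto simp: \<nu>_def)
  have \<nu>m: "\<nu> \<in> measurable D R"
    unfolding R_def D_def
    by (rule measurable_restrict_space2) (use \<nu>sph in auto)
  have spR: "space R = sphere 0 1" by (simp add: R_def space_restrict_space)
  have spM0: "space M0 = sphere 0 1" by (simp add: M0_def spR)
  have setsM0: "sets M0 = sets R" by (simp add: M0_def)
  have emM0: "emeasure M0 a = ennreal (real DIM('a)) *
      emeasure lborel {r *\<^sub>R w | r w. 0 < r \<and> r \<le> 1 \<and> w \<in> a}" if a: "a \<in> sets R" for a
  proof -
    have asub: "a \<subseteq> sphere 0 1" using sets.sets_into_space[OF a] spR by simp
    have pre: "\<nu> -` a \<in> sets borel" using \<nu>m a unfolding D_def by (simp add: measurable_def)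
    have "emeasure M0 a = emeasure D (\<nu> -` a \<inter> space D)"
      unfolding M0_def using \<nu>m a by (rule emeasure_distr)
    also have "\<dots> = (\<integral>\<^sup>+ z. ennreal (real DIM('a)) * indicator {0<..1} (norm z) * indicator (\<nu> -` a) z \<partial>lborel)"
      unfolding D_def using pre by (simp add: emeasure_density nn_integral_set_ennreal mult.commute)
    also have "\<dots> = (\<integral>\<^sup>+ z. ennreal (real DIM('a)) * indicator {z. norm z \<in> {0<..1} \<and> z \<in> \<nu> -` a} z \<partial>lborel)"
      by (intro nn_integral_cong) (auto simp: indicator_def)
    also have "\<dots> = ennreal (real DIM('a)) * emeasure lborel {z. norm z \<in> {0<..1} \<and> z \<in> \<nu> -` a}"
    proof -
      have s1: "{z::'a. norm z \<in> {0<..1}} \<in> sets borel" by measurable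
      have "{z. norm z \<in> {0<..1} \<and> z \<in> \<nu> -` a} = {z. norm z \<in> {0<..1}} \<inter> \<nu> -` a" by auto
      then have "{z. norm z \<in> {0<..1} \<and> z \<in> \<nu> -` a} \<in> sets borel" using s1 pre by auto
      then show ?thesis by (subst nn_integral_cmult_indicator) auto
    qed
    also have "{z. norm z \<in> {0<..1} \<and> z \<in> \<nu> -` a} = {r *\<^sub>R w | r w. 0 < r \<and> r \<le> 1 \<and> w \<in> a}"
    proof (intro equalityI subsetI)
      fix z assume "z \<in> {z. norm z \<in> {0<..1} \<and> z \<in> \<nu> -` a}"
      then have z: "0 < norm z" "norm z \<le> 1" "z /\<^sub>R norm z \<in> a" by (auto simp: \<nu>_def split: if_splits)
      then show "z \<in> {r *\<^sub>R w | r w. 0 < r \<and> r \<le> 1 \<and> w \<in> a}"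
        by (intro CollectI exI[of _ "norm z"] exI[of _ "z /\<^sub>R norm z"]) auto
    next
      fix z assume "z \<in> {r *\<^sub>R w | r w. 0 < r \<and> r \<le> 1 \<and> w \<in> a}"
      then obtain r w where rw: "z = r *\<^sub>R w" "0 < r" "r \<le> 1" "w \<in> a" by blast
      then have nw: "norm w = 1" using asub by auto
      then have nz: "norm z = r" using rw by simp
      have "z \<noteq> 0" using rw nw by auto
      then have "\<nu> z = w" using rw nz by (simp add: \<nu>_def)
      then show "z \<in> {z. norm z \<in> {0<..1} \<and> z \<in> \<nu> -` a}" using rw nz by auto
    qed
    finally show ?thesis .
  qed
  have "sphere_measure = measure_of (sphere 0 1) (sets R)
     (\<lambda>A. ennreal (real DIM('a)) * emeasure lborel {r *\<^sub>R w | r w. 0 < r \<and> r \<le> 1 \<and> w \<in> A})"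
    by (simp add: sphere_measure_def R_def)
  also have "\<dots> = measure_of (sphere 0 1) (sets R) (emeasure M0)"
  proof (rule measure_of_eq)
    show "sets R \<subseteq> Pow (sphere 0 1)" using sets.space_closed[of R] spR by simp
    fix a assume "a \<in> sigma_sets (sphere 0 1) (sets R)"
    then have "a \<in> sets R" using sets.sigma_sets_eq[of R] spR by simp
    then show "ennreal (real DIM('a)) * emeasure lborel {r *\<^sub>R w | r w. 0 < r \<and> r \<le> 1 \<and> w \<in> a} = emeasure M0 a"
      using emM0 by simp
  qed
  also have "\<dots> = M0"
    using measure_of_of_measure[of M0] spM0 setsM0 by simp
  finally have sm: "sphere_measure = M0" .
  have hR: "h \<in> borel_measurable R" unfolding R_def by (rule measurable_restrict_space1) simp
  have "(\<integral>\<^sup>+ w. h w \<partial>(sphere_measure :: 'a measure)) = (\<integral>\<^sup>+ z. h (\<nu> z) \<partial>D)"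
    unfolding sm M0_def using hR by (intro nn_integral_distr[OF \<nu>m]) (simp add: measurable_distr_eq1)
  also have "\<dots> = (\<integral>\<^sup>+ z. ennreal (real DIM('a)) * indicator {0<..1} (norm z) * h (\<nu> z) \<partial>lborel)"
    unfolding D_def by (subst nn_integral_density) auto
  also have "\<dots> = (\<integral>\<^sup>+ z. ennreal (real DIM('a)) * (h (z /\<^sub>R norm z) * indicator {0<..1} (norm z)) \<partial>lborel)"
    by (intro nn_integral_cong) (auto simp: \<nu>_def indicator_def)
  also have "\<dots> = ennreal (real DIM('a)) * (\<integral>\<^sup>+ z. h (z /\<^sub>R norm z) * indicator {0<..1} (norm z) \<partial>lborel)"
    by (rule nn_integral_cmult) measurable
  finally show ?thesis .
qed



lemma nn_scale:
  fixes F :: "'a::euclidean_space \<Rightarrow> ennreal"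
  assumes Fm[measurable]: "F \<in> borel_measurable borel" and c: "c > 0"
  shows "(\<integral>\<^sup>+ z. F z \<partial>lborel) = ennreal (c ^ DIM('a)) * (\<integral>\<^sup>+ z. F (t + c *\<^sub>R z) \<partial>lborel)"
proof -
  have eq: "lborel = density (distr lborel borel (\<lambda>x. t + c *\<^sub>R x)) (\<lambda>_. ennreal (\<bar>c\<bar>^DIM('a)))"
    using lborel_affine[of c t] c by simp
  have "(\<integral>\<^sup>+ z. F z \<partial>lborel) = (\<integral>\<^sup>+ z. F z \<partial>(density (distr lborel borel (\<lambda>x. t + c *\<^sub>R x)) (\<lambda>_. ennreal (\<bar>c\<bar>^DIM('a)))))"
    using arg_cong[OF eq, of "\<lambda>M. nn_integral M F"] .
  also have "\<dots> = (\<integral>\<^sup>+ z. ennreal (\<bar>c\<bar>^DIM('a)) * F z \<partial>(distr lborel borel (\<lambda>x. t + c *\<^sub>R x)))"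
    by (subst nn_integral_density) auto
  also have "\<dots> = (\<integral>\<^sup>+ z. ennreal (\<bar>c\<bar>^DIM('a)) * F (t + c *\<^sub>R z) \<partial>lborel)"
    by (subst nn_integral_distr) auto
  also have "\<dots> = ennreal (c ^ DIM('a)) * (\<integral>\<^sup>+ z. F (t + c *\<^sub>R z) \<partial>lborel)"
    using c by (subst nn_integral_cmult) auto
  finally show ?thesis .
qed

lemma ball_borel[measurable]: "ball (c::'a::euclidean_space) r \<in> sets borel"
  by (simp add: borel_open)

lemma sphere_null: "sphere (0::'a::euclidean_space) r \<in> null_sets lborel"
  using negligible_sphere[of "0::'a" r]
  by (auto simp: null_sets_completion_iff negligible_iff_null_sets negligible_convex_frontier)

lemma real_shell_ineq:
  fixes q r X A p s N :: real
  assumes "0 < q" "q \<le> r" "r \<le> 1" "X \<ge> 0" "A \<ge> 0" "p > 0" "0 < s" "s < 1" "N \<ge> 0"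
  shows "p*(1-s) * q powr (p*(1-s)) * A powr p * (X powr p / r powr p)
       \<le> p*(1-s) * (A*X / r powr s) powr p / r powr N"
proof -
  define \<beta> where "\<beta> = p*(1-s)"
  have r0: "r > 0" using assms by linarith
  have b0: "\<beta> > 0" using assms by (simp add: \<beta>_def)
  have e1: "(A*X / r powr s) powr p = A powr p * X powr p / r powr (s*p)"
    using assms r0 by (simp add: powr_mult powr_divide powr_powr)
  have e2: "r powr p = r powr (s*p) * r powr \<beta>"
    by (simp add: \<beta>_def powr_add[symmetric] algebra_simps)
  have qb: "q powr \<beta> \<le> r powr \<beta>" using assms b0 by (simp add: powr_mono2)
  have rN: "r powr N \<le> 1" using assms r0 by (simp add: powr_le1)
  have rN0: "r powr N > 0" using r0 by simp
  have "q powr \<beta> * r powr N \<le> r powr \<beta> * 1"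
    using qb rN by (intro mult_mono) auto
  then have key: "q powr \<beta> / r powr \<beta> \<le> 1 / r powr N"
    using rN0 r0 by (simp add: field_simps)
  have P: "A powr p * X powr p \<ge> 0" by simp
  have "\<beta> * q powr \<beta> * A powr p * (X powr p / r powr p)
      = \<beta> * (A powr p * X powr p / r powr (s*p)) * (q powr \<beta> / r powr \<beta>)"
    by (simp add: e2 field_simps)
  also have "\<dots> \<le> \<beta> * (A powr p * X powr p / r powr (s*p)) * (1 / r powr N)"
    using key b0 P by (intro mult_left_mono) auto
  also have "\<dots> = \<beta> * (A*X / r powr s) powr p / r powr N"
    by (simp add: e1)
  finally show ?thesis by (simp add: \<beta>_def)
qed


lemma scale_id:
  fixes q r A p s n :: real
  assumes "q > 0" "r > 0" "A \<ge> 0"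
  shows "q powr n * (c * (q*A / (q*r) powr s) powr p / (q*r) powr n)
       = q powr (p*(1-s)) * (c * (A / r powr s) powr p / r powr n)"
proof -
  have "q*A / (q*r) powr s = q powr (1-s) * (A / r powr s)"
    using assms by (simp add: powr_mult powr_diff field_simps)
  moreover have "(q powr (1-s) * (A / r powr s)) powr p = (q powr (1-s)) powr p * (A / r powr s) powr p"
    using assms powr_mult[of "q powr (1-s)" "A / r powr s" p] by simp
  ultimately have "(q*A / (q*r) powr s) powr p = q powr (p*(1-s)) * (A / r powr s) powr p"
    by (simp add: powr_powr mult.commute)
  then show ?thesis using assms by (simp add: powr_mult field_simps)
qed

lemma shells:
  fixes a :: "'a::euclidean_space" and p s q :: real
  assumes p: "p > 0" and s: "0 < s" "s < 1" and q: "0 < q" "q < 1" and a: "a \<noteq> 0"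
  shows "ennreal (p*(1-s) * q powr (p*(1-s)) * (1 - q ^ DIM('a)) / (1 - q powr (p*(1-s))) * norm a powr p)
          * (\<integral>\<^sup>+ z. ennreal (\<bar>(a /\<^sub>R norm a) \<bullet> z\<bar> powr p / norm z powr p) * indicator {0<..<1} (norm z) \<partial>lborel)
       \<le> (\<integral>\<^sup>+ z. ennreal (p*(1-s) * (\<bar>a \<bullet> z\<bar> / norm z powr s) powr p / norm z powr real DIM('a)) * indicator (ball 0 1) z \<partial>lborel)"
proof -
  define \<beta> where "\<beta> = p*(1-s)"
  define b where "b = a /\<^sub>R norm a"
  define \<Phi> where "\<Phi> z = ennreal (\<beta> * (\<bar>a \<bullet> z\<bar> / norm z powr s) powr p / norm z powr real DIM('a)) * indicator (ball 0 1) z" for z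
  define H where "H z = ennreal (\<bar>b \<bullet> z\<bar> powr p / norm z powr p) * indicator {0<..<1} (norm z)" for z
  have b0: "\<beta> > 0" using p s by (simp add: \<beta>_def)
  have nb: "norm b = 1" using a by (simp add: b_def)
  have ab: "\<bar>a \<bullet> z\<bar> = norm a * \<bar>b \<bullet> z\<bar>" for z
    using a by (simp add: b_def abs_mult)
  have \<Phi>m[measurable]: "\<Phi> \<in> borel_measurable borel" unfolding \<Phi>_def by measurable
  have Hm[measurable]: "H \<in> borel_measurable borel" unfolding H_def by measurable
  have \<Phi>0: "\<Phi> 0 = 0" by (simp add: \<Phi>_def)
  have H0: "H 0 = 0" by (simp add: H_def)
  have Isplit: "(\<integral>\<^sup>+ z. \<Phi> z \<partial>lborel) = (\<integral>\<^sup>+ z. \<Phi> z * indicator {q..} (norm z) \<partial>lborel) + (\<integral>\<^sup>+ z. \<Phi> z * indicator (ball 0 q) z \<partial>lborel)"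
    by (subst nn_integral_add[symmetric]) (auto intro!: nn_integral_cong simp: indicator_def)
  have Hsplit: "(\<integral>\<^sup>+ z. H z \<partial>lborel) = (\<integral>\<^sup>+ z. H z * indicator {q..} (norm z) \<partial>lborel) + (\<integral>\<^sup>+ z. H z * indicator (ball 0 q) z \<partial>lborel)"
    by (subst nn_integral_add[symmetric]) (auto intro!: nn_integral_cong simp: indicator_def)
  have Iscale: "(\<integral>\<^sup>+ z. \<Phi> z * indicator (ball 0 q) z \<partial>lborel) = ennreal (q powr \<beta>) * (\<integral>\<^sup>+ z. \<Phi> z \<partial>lborel)"
  proof -
    have "(\<integral>\<^sup>+ z. \<Phi> z * indicator (ball 0 q) z \<partial>lborel) = ennreal (q ^ DIM('a)) * (\<integral>\<^sup>+ z. \<Phi> (0 + q *\<^sub>R z) * indicator (ball 0 q) (0 + q *\<^sub>R z) \<partial>lborel)"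
      using q by (intro nn_scale) auto
    also have "\<dots> = (\<integral>\<^sup>+ z. ennreal (q ^ DIM('a)) * (\<Phi> (q *\<^sub>R z) * indicator (ball 0 q) (q *\<^sub>R z)) \<partial>lborel)"
      by (subst nn_integral_cmult) auto
    also have "\<dots> = (\<integral>\<^sup>+ z. ennreal (q powr \<beta>) * \<Phi> z \<partial>lborel)"
    proof (intro nn_integral_cong)
      fix z :: 'a
      show "ennreal (q ^ DIM('a)) * (\<Phi> (q *\<^sub>R z) * indicator (ball 0 q) (q *\<^sub>R z)) = ennreal (q powr \<beta>) * \<Phi> z"
      proof (cases "z = 0")
        case True then show ?thesis by (simp add: \<Phi>0)
      next
        case False
        show ?thesis
        proof (cases "norm z < 1")
          case False then show ?thesis using q by (simp add: \<Phi>_def indicator_def)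
        next
          case True
          have nz: "norm z > 0" using \<open>z \<noteq> 0\<close> by simp
          have "q powr real DIM('a) * (\<beta> * (q * \<bar>a \<bullet> z\<bar> / (q * norm z) powr s) powr p / (q * norm z) powr real DIM('a))
              = q powr \<beta> * (\<beta> * (\<bar>a \<bullet> z\<bar> / norm z powr s) powr p / norm z powr real DIM('a))"
            using scale_id[of q "norm z" "\<bar>a \<bullet> z\<bar>" "real DIM('a)" \<beta> s p] q nz by (simp add: \<beta>_def)
          moreover have "q powr real DIM('a) = q ^ DIM('a)" using q by (simp add: powr_realpow)
          ultimately have eq: "q ^ DIM('a) * (\<beta> * (q * \<bar>a \<bullet> z\<bar> / (q * norm z) powr s) powr p / (q * norm z) powr real DIM('a))
              = q powr \<beta> * (\<beta> * (\<bar>a \<bullet> z\<bar> / norm z powr s) powr p / norm z powr real DIM('a))" by simp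
          have "\<Phi> (q *\<^sub>R z) * indicator (ball 0 q) (q *\<^sub>R z) = ennreal (\<beta> * (q * \<bar>a \<bullet> z\<bar> / (q * norm z) powr s) powr p / (q * norm z) powr real DIM('a))"
            using True q mult_strict_mono[of q 1 "norm z" 1] by (simp add: \<Phi>_def abs_mult indicator_def)
          moreover have "\<Phi> z = ennreal (\<beta> * (\<bar>a \<bullet> z\<bar> / norm z powr s) powr p / norm z powr real DIM('a))"
            using True by (simp add: \<Phi>_def)
          ultimately show ?thesis using eq q b0
            by (simp add: ennreal_mult'[symmetric] flip: ennreal_mult)
        qed
      qed
    qed
    also have "\<dots> = ennreal (q powr \<beta>) * (\<integral>\<^sup>+ z. \<Phi> z \<partial>lborel)"
      by (subst nn_integral_cmult) auto
    finally show ?thesis .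
  qed
  have Hscale: "(\<integral>\<^sup>+ z. H z * indicator (ball 0 q) z \<partial>lborel) = ennreal (q ^ DIM('a)) * (\<integral>\<^sup>+ z. H z \<partial>lborel)"
  proof -
    have "(\<integral>\<^sup>+ z. H z * indicator (ball 0 q) z \<partial>lborel) = ennreal (q ^ DIM('a)) * (\<integral>\<^sup>+ z. H (0 + q *\<^sub>R z) * indicator (ball 0 q) (0 + q *\<^sub>R z) \<partial>lborel)"
      using q by (intro nn_scale) auto
    also have "(\<integral>\<^sup>+ z. H (0 + q *\<^sub>R z) * indicator (ball 0 q) (0 + q *\<^sub>R z) \<partial>lborel) = (\<integral>\<^sup>+ z. H z \<partial>lborel)"
    proof (intro nn_integral_cong)
      fix z :: 'a
      have "\<bar>b \<bullet> z\<bar> \<ge> 0" by simp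
      then have "(q * \<bar>b \<bullet> z\<bar>) powr p / (q * norm z) powr p = \<bar>b \<bullet> z\<bar> powr p / norm z powr p"
        using q by (simp add: powr_mult)
      then show "H (0 + q *\<^sub>R z) * indicator (ball 0 q) (0 + q *\<^sub>R z) = H z"
        using q mult_strict_mono[of q 1 "norm z" 1] by (auto simp: H_def indicator_def abs_mult mult_less_cancel_left1 mult_less_cancel_left2)
    qed
    finally show ?thesis .
  qed
  have Ishell: "ennreal (\<beta> * q powr \<beta> * norm a powr p) * (\<integral>\<^sup>+ z. H z * indicator {q..} (norm z) \<partial>lborel)
      \<le> (\<integral>\<^sup>+ z. \<Phi> z * indicator {q..} (norm z) \<partial>lborel)"
  proof -
    have "ennreal (\<beta> * q powr \<beta> * norm a powr p) * (\<integral>\<^sup>+ z. H z * indicator {q..} (norm z) \<partial>lborel)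
       = (\<integral>\<^sup>+ z. ennreal (\<beta> * q powr \<beta> * norm a powr p) * (H z * indicator {q..} (norm z)) \<partial>lborel)"
      by (subst nn_integral_cmult) auto
    also have "\<dots> \<le> (\<integral>\<^sup>+ z. \<Phi> z * indicator {q..} (norm z) \<partial>lborel)"
    proof (intro nn_integral_mono)
      fix z :: 'a
      show "ennreal (\<beta> * q powr \<beta> * norm a powr p) * (H z * indicator {q..} (norm z)) \<le> \<Phi> z * indicator {q..} (norm z)"
      proof (cases "q \<le> norm z \<and> norm z < 1")
        case False then show ?thesis by (auto simp: H_def indicator_def)
      next
        case True
        have ineq: "\<beta> * q powr \<beta> * norm a powr p * (\<bar>b \<bullet> z\<bar> powr p / norm z powr p)
            \<le> \<beta> * (norm a * \<bar>b \<bullet> z\<bar> / norm z powr s) powr p / norm z powr real DIM('a)"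
          using real_shell_ineq[of q "norm z" "\<bar>b \<bullet> z\<bar>" "norm a" p s "real DIM('a)"] True q p s
          by (simp add: \<beta>_def)
        have "ennreal (\<beta> * q powr \<beta> * norm a powr p) * (H z * indicator {q..} (norm z))
            = ennreal (\<beta> * q powr \<beta> * norm a powr p * (\<bar>b \<bullet> z\<bar> powr p / norm z powr p))"
          using True q b0 by (simp add: H_def indicator_def ennreal_mult[symmetric])
        also have "\<dots> \<le> \<Phi> z * indicator {q..} (norm z)"
          using True ineq by (simp add: \<Phi>_def indicator_def ab ennreal_leI)
        finally show ?thesis .
      qed
    qed
    finally show ?thesis .
  qed
  have Hfin: "(\<integral>\<^sup>+ z. H z \<partial>lborel) < \<infinity>"
  proof -
    have "(\<integral>\<^sup>+ z. H z \<partial>lborel) \<le> (\<integral>\<^sup>+ z. indicator (ball (0::'a) 1) z \<partial>lborel)"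
    proof (intro nn_integral_mono)
      fix z :: 'a
      have "\<bar>b \<bullet> z\<bar> \<le> norm z" using Cauchy_Schwarz_ineq2[of b z] nb by simp
      then have "\<bar>b \<bullet> z\<bar> powr p \<le> norm z powr p" using p by (simp add: powr_mono2)
      then have "\<bar>b \<bullet> z\<bar> powr p / norm z powr p \<le> 1"
        by (cases "z = 0") (auto simp: divide_le_eq_1)
      then show "H z \<le> indicator (ball 0 1) z"
        by (auto simp: H_def indicator_def ennreal_le_1)
    qed
    also have "\<dots> = emeasure lborel (ball (0::'a) 1)" by simp
    also have "\<dots> < \<infinity>" by (rule emeasure_lborel_ball_finite)
    finally show ?thesis .
  qed
  have goal: "ennreal (\<beta> * q powr \<beta> * (1 - q ^ DIM('a)) / (1 - q powr \<beta>) * norm a powr p) * (\<integral>\<^sup>+ z. H z \<partial>lborel)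
        \<le> (\<integral>\<^sup>+ z. \<Phi> z \<partial>lborel)"
  proof (cases "(\<integral>\<^sup>+ z. \<Phi> z \<partial>lborel) = \<infinity>")
    case True then show ?thesis by simp
  next
    case False
    obtain i where i: "(\<integral>\<^sup>+ z. \<Phi> z \<partial>lborel) = ennreal i" "i \<ge> 0" using False by (cases "(\<integral>\<^sup>+ z. \<Phi> z \<partial>lborel)") auto
    obtain j where j: "(\<integral>\<^sup>+ z. H z \<partial>lborel) = ennreal j" "j \<ge> 0" using Hfin by (cases "(\<integral>\<^sup>+ z. H z \<partial>lborel)") auto
    have fA: "(\<integral>\<^sup>+ z. \<Phi> z * indicator {q..} (norm z) \<partial>lborel) \<noteq> \<infinity>" using Isplit False by auto
    obtain ia where ia: "(\<integral>\<^sup>+ z. \<Phi> z * indicator {q..} (norm z) \<partial>lborel) = ennreal ia" "ia \<ge> 0"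
      using fA by (cases "(\<integral>\<^sup>+ z. \<Phi> z * indicator {q..} (norm z) \<partial>lborel)") auto
    have fHA: "(\<integral>\<^sup>+ z. H z * indicator {q..} (norm z) \<partial>lborel) \<noteq> \<infinity>" using Hsplit Hfin by auto
    obtain ja where ja: "(\<integral>\<^sup>+ z. H z * indicator {q..} (norm z) \<partial>lborel) = ennreal ja" "ja \<ge> 0"
      using fHA by (cases "(\<integral>\<^sup>+ z. H z * indicator {q..} (norm z) \<partial>lborel)") auto
    have qb: "q powr \<beta> < 1" using q b0 by (simp add: powr01_less_one)
    have qb0: "q powr \<beta> \<ge> 0" by simp
    have qN: "q ^ DIM('a) \<le> 1" using q by (simp add: power_le_one)
    have e1: "i = ia + q powr \<beta> * i"
      using Isplit Iscale i ia by (simp add: ennreal_mult'[symmetric] flip: ennreal_plus)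
    have e2: "j = ja + q ^ DIM('a) * j"
      using Hsplit Hscale j ja q by (simp add: ennreal_mult'[symmetric] flip: ennreal_plus)
    have e3: "\<beta> * q powr \<beta> * norm a powr p * ja \<le> ia"
      using Ishell ia ja b0 by (simp add: ennreal_mult'[symmetric])
    have "\<beta> * q powr \<beta> * (1 - q ^ DIM('a)) / (1 - q powr \<beta>) * norm a powr p * j
        = (\<beta> * q powr \<beta> * norm a powr p * ((1 - q ^ DIM('a)) * j)) / (1 - q powr \<beta>)"
      by (simp add: field_simps)
    also have "(1 - q ^ DIM('a)) * j = ja" using e2 by (simp add: algebra_simps)
    also have "(\<beta> * q powr \<beta> * norm a powr p * ja) / (1 - q powr \<beta>) \<le> ia / (1 - q powr \<beta>)"
      using e3 qb by (simp add: divide_right_mono)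
    also have "ia / (1 - q powr \<beta>) = i" using e1 qb by (simp add: field_simps)
    finally have R: "\<beta> * q powr \<beta> * (1 - q ^ DIM('a)) / (1 - q powr \<beta>) * norm a powr p * j \<le> i" .
    have nonneg: "\<beta> * q powr \<beta> * (1 - q ^ DIM('a)) / (1 - q powr \<beta>) * norm a powr p \<ge> 0"
      using b0 qb qN by (intro mult_nonneg_nonneg divide_nonneg_nonneg) auto
    show ?thesis using R nonneg i j by (simp add: ennreal_mult'[symmetric] ennreal_leI)
  qed
  show ?thesis using goal unfolding \<beta>_def b_def H_def \<Phi>_def .
qed



lemma coef_lim:
  fixes b :: real and n :: nat
  assumes b: "b > 0"
  shows "((\<lambda>q. b * q powr b * (1 - q ^ n) / (1 - q powr b)) \<longlongrightarrow> real n) (at_left 1)"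
proof -
  have d1: "((\<lambda>q. (q ^ n - 1 ^ n) / (q - 1)) \<longlongrightarrow> real n * 1 ^ (n - 1)) (at (1::real))"
    using DERIV_pow[of n 1] by (simp add: has_field_derivative_iff)
  have d2: "((\<lambda>q. (q powr b - 1 powr b) / (q - 1)) \<longlongrightarrow> b * 1 powr (b - 1)) (at (1::real))"
    using has_real_derivative_powr[of 1 b] by (simp add: has_field_derivative_iff)
  have c: "((\<lambda>q. q powr b) \<longlongrightarrow> 1 powr b) (at (1::real))"
    by (intro tendsto_intros) auto
  have L: "((\<lambda>q. b * q powr b * ((q ^ n - 1) / (q - 1)) / ((q powr b - 1) / (q - 1))) \<longlongrightarrow> b * 1 * real n / b) (at (1::real))"
    using d1 d2 c b by (intro tendsto_intros) auto
  have ev: "eventually (\<lambda>q. b * q powr b * ((q ^ n - 1) / (q - 1)) / ((q powr b - 1) / (q - 1))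
       = b * q powr b * (1 - q ^ n) / (1 - q powr b)) (at (1::real))"
  proof -
    have "eventually (\<lambda>q. q \<noteq> (1::real)) (at 1)" by (simp add: eventually_at_filter)
    then show ?thesis
    proof (rule eventually_mono)
      fix q :: real assume "q \<noteq> 1"
      then have "q - 1 \<noteq> 0" by simp
      then show "b * q powr b * ((q ^ n - 1) / (q - 1)) / ((q powr b - 1) / (q - 1)) = b * q powr b * (1 - q ^ n) / (1 - q powr b)"
      proof -
        have g: "(X/(q-1))/(Y/(q-1)) = X/Y" for X Y :: real
          using \<open>q - 1 \<noteq> 0\<close> by (cases "Y = 0") (simp_all add: field_simps)
        have "b * q powr b * ((q ^ n - 1) / (q - 1)) / ((q powr b - 1) / (q - 1))
            = b * q powr b * (((q ^ n - 1) / (q - 1)) / ((q powr b - 1) / (q - 1)))" by simp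
        also have "\<dots> = b * q powr b * ((q ^ n - 1) / (q powr b - 1))" by (simp only: g)
        also have "(q ^ n - 1) / (q powr b - 1) = (1 - q ^ n) / (1 - q powr b)"
          by (metis minus_diff_eq minus_divide_divide)
        finally show ?thesis by simp
      qed
    qed
  qed
  have "((\<lambda>q. b * q powr b * (1 - q ^ n) / (1 - q powr b)) \<longlongrightarrow> real n) (at (1::real))"
    using tendsto_cong[OF ev] L b by simp
  then show ?thesis by (rule filterlim_mono[OF _ order_refl at_le]) simp
qed



lemma pointwise_liminf:
  fixes G :: "real \<Rightarrow> real" and t lam :: "nat \<Rightarrow> real"
  assumes mono: "mono_on {0..} G" and pos: "\<And>t. t > 0 \<Longrightarrow> G t > 0"
    and rv: "\<And>l. l > 0 \<Longrightarrow> ((\<lambda>t. G (l * t) / G t) \<longlongrightarrow> l powr p) (at_right 0)"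
    and tlim: "filterlim t (at_right 0) sequentially"
    and laml: "lam \<longlonglongrightarrow> L" and lam0: "\<And>n. lam n \<ge> 0"
    and \<kappa>: "\<kappa> > 0" and p: "p > 0"
  shows "ennreal (\<kappa> * L powr p) \<le> liminf (\<lambda>n. ennreal (\<kappa> * G (t n * lam n) / G (t n)))"
proof (subst le_Liminf_iff, intro allI impI)
  fix y assume y: "y < ennreal (\<kappa> * L powr p)"
  have L0: "L \<ge> 0" using laml lam0 by (intro LIMSEQ_le_const) auto
  obtain y' where y': "y = ennreal y'" "y' \<ge> 0" using y by (cases y) auto
  have y'lt: "y' < \<kappa> * L powr p" using y y' by (simp add: ennreal_less_iff)
  then have Lp: "L > 0" using L0 \<kappa> y'(2) by (cases "L = 0") auto
  have cont: "((\<lambda>l. \<kappa> * l powr p) \<longlongrightarrow> \<kappa> * L powr p) (at_left L)"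
    using Lp by (intro tendsto_intros) auto
  have ev1: "eventually (\<lambda>l. y' < \<kappa> * l powr p) (at_left L)"
    using order_tendstoD(1)[OF cont y'lt] .
  have ev2: "eventually (\<lambda>l. 0 < l) (at_left L)"
    using eventually_at_left_real[OF Lp] by (rule eventually_mono) auto
  have "eventually (\<lambda>l. 0 < l \<and> y' < \<kappa> * l powr p) (at_left L)"
    using ev1 ev2 by eventually_elim auto
  moreover have "eventually (\<lambda>l. l < L) (at_left L)" by (simp add: eventually_at_filter)
  ultimately have "eventually (\<lambda>l. 0 < l \<and> y' < \<kappa> * l powr p \<and> l < L) (at_left L)"
    by eventually_elim auto
  then obtain l where l: "0 < l" "y' < \<kappa> * l powr p" "l < L"
    using eventually_happens'[OF trivial_limit_at_left_real] by blast
  have e3: "eventually (\<lambda>n. l < lam n) sequentially" using order_tendstoD(1)[OF laml l(3)] .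
  have rvl: "((\<lambda>n. \<kappa> * (G (l * t n) / G (t n))) \<longlongrightarrow> \<kappa> * l powr p) sequentially"
    using filterlim_compose[OF rv[OF l(1)] tlim] by (intro tendsto_intros)
  have e4: "eventually (\<lambda>n. y' < \<kappa> * (G (l * t n) / G (t n))) sequentially"
    using order_tendstoD(1)[OF rvl l(2)] .
  have e5: "eventually (\<lambda>n. t n > 0) sequentially"
    using eventually_compose_filterlim[OF _ tlim, of "\<lambda>x. x > 0"] by (simp add: eventually_at_filter)
  show "eventually (\<lambda>n. y < ennreal (\<kappa> * G (t n * lam n) / G (t n))) sequentially"
    using e3 e4 e5
  proof eventually_elim
    case (elim n)
    have "G (l * t n) \<le> G (t n * lam n)"
      using elim l(1) by (intro mono_onD[OF mono]) (auto simp: mult.commute intro: mult_right_mono)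
    then have "\<kappa> * (G (l * t n) / G (t n)) \<le> \<kappa> * G (t n * lam n) / G (t n)"
      using pos[OF elim(3)] \<kappa> by (simp add: divide_right_mono)
    then have "y' < \<kappa> * G (t n * lam n) / G (t n)" using elim by linarith
    then show ?case using y' by (simp add: ennreal_less_iff)
  qed
qed


lemma p_pos_aux:
  fixes G :: "real \<Rightarrow> real"
  assumes cont: "continuous_on {0..} G" and G0: "G 0 = 0" and Gnn: "\<And>t. t \<ge> 0 \<Longrightarrow> G t \<ge> 0"
    and c: "c > 0" and bound: "\<And>t. t > 0 \<Longrightarrow> G t / t powr p \<ge> c"
  shows "p > 0"
proof (rule ccontr)
  assume np: "\<not> p > 0"
  have "(G \<longlongrightarrow> G 0) (at 0 within {0..})"
    using continuous_on_def[THEN iffD1, OF cont, rule_format, of 0] by simp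
  then have "(G \<longlongrightarrow> 0) (at_right 0)"
    using G0 by (metis atLeast_iff greaterThan_iff less_imp_le subsetI tendsto_within_subset)
  then have e1: "eventually (\<lambda>t. G t < c) (at_right 0)"
    using c by (intro order_tendstoD(2)) auto
  have e2: "eventually (\<lambda>t. 0 < t \<and> t < (1::real)) (at_right 0)"
    using eventually_at_right_real[of 0 1] by (rule eventually_mono) auto
  have "eventually (\<lambda>t. G t < c \<and> 0 < t \<and> t < 1) (at_right (0::real))"
    using e1 e2 by eventually_elim auto
  then obtain t where t: "G t < c" "0 < t" "t < 1"
    using eventually_happens'[OF trivial_limit_at_right_real] by blast
  have tp: "1 \<le> t powr p" using t np by (smt (verit, best) powr01_less_one)
  have "G t / t powr p \<le> G t"
    using tp Gnn[of t] t by (simp add: divide_le_eq mult_le_cancel_left1)  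
  then show False using bound[OF t(2)] t by linarith
qed



theorem proposition3p6:
  fixes G :: "real \<Rightarrow> real" and p s :: real
    and u :: "'a::euclidean_space \<Rightarrow> real" and gradu :: "'a \<Rightarrow> 'a" and x :: 'a
  assumes "0 < s" and "s < 1"
    and "hypH G p"
    and "continuous_on UNIV gradu"
    and "\<And>z. (u has_derivative (\<lambda>h. gradu z \<bullet> h)) (at z)"
  shows "Liminf (at_right 0)
           (\<lambda>\<delta>. ennreal (p * (1 - s) / G (\<delta> powr (1 - s))) *
              (\<integral>\<^sup>+ y \<in> ball x \<delta>.
                 ennreal (G (\<bar>u x - u y\<bar> / norm (x - y) powr s) / norm (x - y) powr real DIM('a))
               \<partial>lborel))
         \<ge> ennreal (K_const TYPE('a) p * norm (gradu x) powr p)"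
proof -
  note s = assms(1,2)
  have orl: "orlicz G" and rv0: "regvar0 p G" and clb: "\<exists>c>0. \<forall>t>0. G t / t powr p \<ge> c"
    using assms(3) unfolding hypH_def by auto
  have Gnn: "\<And>t. t \<ge> 0 \<Longrightarrow> G t \<ge> 0" and Gcont: "continuous_on {0..} G"
    and Gmono: "mono_on {0..} G" and G00: "G 0 = 0"
    using orl unfolding orlicz_def by auto
  have Gpos: "\<And>t. t > 0 \<Longrightarrow> G t > 0" and rv: "\<And>l. l > 0 \<Longrightarrow> ((\<lambda>t. G (l * t) / G t) \<longlongrightarrow> l powr p) (at_right 0)"
    using rv0 unfolding regvar0_def by auto
  obtain cl where cl: "cl > 0" "\<And>t. t > 0 \<Longrightarrow> G t / t powr p \<ge> cl" using clb by auto
  have p: "p > 0" using p_pos_aux[OF Gcont G00 Gnn cl(1) cl(2)] by blast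
  define a where "a = gradu x"
  define X where "X = (\<lambda>\<delta>. ennreal (p * (1 - s) / G (\<delta> powr (1 - s))) *
              (\<integral>\<^sup>+ y \<in> ball x \<delta>.
                 ennreal (G (\<bar>u x - u y\<bar> / norm (x - y) powr s) / norm (x - y) powr real DIM('a))
               \<partial>lborel))"
  define C where "C = ennreal (K_const TYPE('a) p * norm a powr p)"
  have main: "C \<le> Liminf (at_right 0) X"
  proof (cases "a = 0")
    case True then show ?thesis by (simp add: C_def)
  next
    case False
    define \<beta> where "\<beta> = p * (1 - s)"
    have b0: "\<beta> > 0" using p s by (simp add: \<beta>_def)
    define \<Phi> where "\<Phi> z = ennreal (p*(1-s) * (\<bar>a \<bullet> z\<bar> / norm z powr s) powr p / norm z powr real DIM('a)) * indicator (ball 0 1) z" for z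
    have ucont: "continuous_on UNIV u"
      using assms(5) by (intro continuous_at_imp_continuous_on) (auto intro: has_derivative_continuous)
    have um[measurable]: "u \<in> borel_measurable borel" using ucont by (rule borel_measurable_continuous_onI)
    define G0 where "G0 t = G \<bar>t\<bar>" for t
    have G0cont: "continuous_on UNIV G0"
      unfolding G0_def by (rule continuous_on_compose2[OF Gcont]) (auto intro: continuous_intros)
    have G0m[measurable]: "G0 \<in> borel_measurable borel" using G0cont by (rule borel_measurable_continuous_onI)
    have Xeq: "X \<delta> = (\<integral>\<^sup>+ z. ennreal (\<beta> / G (\<delta> powr (1 - s))) *
        (ennreal (G0 (\<bar>u x - u (x + \<delta> *\<^sub>R z)\<bar> / (\<delta> * norm z) powr s) / norm z powr real DIM('a)) * indicator (ball 0 1) z) \<partial>lborel)"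
      if d: "\<delta> > 0" for \<delta>
    proof -
      define F where "F y = ennreal (G0 (\<bar>u x - u y\<bar> / norm (x - y) powr s) / norm (x - y) powr real DIM('a)) * indicator (ball x \<delta>) y" for y
      have Fm[measurable]: "F \<in> borel_measurable borel" unfolding F_def by measurable
      have "X \<delta> = ennreal (\<beta> / G (\<delta> powr (1 - s))) * (\<integral>\<^sup>+ y. F y \<partial>lborel)"
        by (simp add: X_def F_def G0_def \<beta>_def)
      also have "(\<integral>\<^sup>+ y. F y \<partial>lborel) = ennreal (\<delta> ^ DIM('a)) * (\<integral>\<^sup>+ z. F (x + \<delta> *\<^sub>R z) \<partial>lborel)"
        using d by (intro nn_scale) auto
      also have "\<dots> = (\<integral>\<^sup>+ z. ennreal (\<delta> ^ DIM('a)) * F (x + \<delta> *\<^sub>R z) \<partial>lborel)"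
        by (subst nn_integral_cmult) auto
      also have "\<dots> = (\<integral>\<^sup>+ z. ennreal (G0 (\<bar>u x - u (x + \<delta> *\<^sub>R z)\<bar> / (\<delta> * norm z) powr s) / norm z powr real DIM('a)) * indicator (ball 0 1) z \<partial>lborel)"
      proof (intro nn_integral_cong)
        fix z :: 'a
        have nrm: "norm (x - (x + \<delta> *\<^sub>R z)) = \<delta> * norm z" using d by simp
        have ind: "indicator (ball x \<delta>) (x + \<delta> *\<^sub>R z) = (indicator (ball 0 1) z :: ennreal)"
          using d by (simp add: indicator_def dist_norm)
        define V where "V = G0 (\<bar>u x - u (x + \<delta> *\<^sub>R z)\<bar> / (\<delta> * norm z) powr s)"
        have V0: "V \<ge> 0" unfolding V_def G0_def by (rule Gnn) simp
        have "\<delta> ^ DIM('a) * (V / (\<delta> * norm z) powr real DIM('a)) = V / norm z powr real DIM('a)"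
        proof (cases "z = 0")
          case True then show ?thesis by simp
        next
          case False
          then have "(\<delta> * norm z) powr real DIM('a) = \<delta> ^ DIM('a) * norm z powr real DIM('a)"
            using d by (simp add: powr_mult powr_realpow)
          then show ?thesis using d False by simp
        qed
        then have "ennreal (\<delta> ^ DIM('a)) * ennreal (V / (\<delta> * norm z) powr real DIM('a)) = ennreal (V / norm z powr real DIM('a))"
          using d by (simp add: ennreal_mult'[symmetric])
        then show "ennreal (\<delta> ^ DIM('a)) * F (x + \<delta> *\<^sub>R z) = ennreal (G0 (\<bar>u x - u (x + \<delta> *\<^sub>R z)\<bar> / (\<delta> * norm z) powr s) / norm z powr real DIM('a)) * indicator (ball 0 1) z"
          unfolding F_def nrm ind V_def[symmetric]
          by (simp add: mult.assoc[symmetric])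
      qed
      also have "ennreal (\<beta> / G (\<delta> powr (1 - s))) * \<dots> = (\<integral>\<^sup>+ z. ennreal (\<beta> / G (\<delta> powr (1 - s))) *
        (ennreal (G0 (\<bar>u x - u (x + \<delta> *\<^sub>R z)\<bar> / (\<delta> * norm z) powr s) / norm z powr real DIM('a)) * indicator (ball 0 1) z) \<partial>lborel)"
        by (subst nn_integral_cmult) auto
      finally show ?thesis .
    qed
    have A: "(\<integral>\<^sup>+ z. \<Phi> z \<partial>lborel) \<le> liminf (\<lambda>n. X (f n))" if fpos: "\<And>n. 0 < f n" and flim: "f \<longlonglongrightarrow> 0" for f
    proof -
      define t where "t n = f n powr (1 - s)" for n
      define h where "h n z = ennreal (\<beta> / G (t n)) *
        (ennreal (G0 (\<bar>u x - u (x + f n *\<^sub>R z)\<bar> / (f n * norm z) powr s) / norm z powr real DIM('a)) * indicator (ball 0 1) z)" for n z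
      have hm[measurable]: "h n \<in> borel_measurable borel" for n unfolding h_def by measurable
      have Xh: "X (f n) = (\<integral>\<^sup>+ z. h n z \<partial>lborel)" for n
        unfolding h_def t_def using Xeq[OF fpos[of n]] by simp
      have tlim0: "t \<longlonglongrightarrow> 0"
        unfolding t_def by (rule tendsto_zero_powrI[OF flim tendsto_const]) (use fpos s in \<open>auto intro!: always_eventually less_imp_le\<close>)
      have fne: "f n \<noteq> 0" for n using fpos[of n] by simp
      have tlim: "filterlim t (at_right 0) sequentially"
        using tlim0 fpos fne by (intro tendsto_imp_filterlim_at_right) (auto simp: t_def intro!: always_eventually)
      have flim': "filterlim f (at 0) sequentially"
        using flim fne by (intro filterlim_atI) (auto intro!: always_eventually)
      have pw: "\<Phi> z \<le> liminf (\<lambda>n. h n z)" for z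
      proof (cases "z \<in> ball 0 1 \<and> z \<noteq> 0")
        case False then show ?thesis by (auto simp: \<Phi>_def)
      next
        case True
        then have nz: "norm z > 0" "norm z < 1" by auto
        define \<kappa> where "\<kappa> = \<beta> / norm z powr real DIM('a)"
        define lam where "lam n = \<bar>u x - u (x + f n *\<^sub>R z)\<bar> / (f n * norm z powr s)" for n
        define L where "L = \<bar>a \<bullet> z\<bar> / norm z powr s"
        have \<kappa>0: "\<kappa> > 0" using b0 nz by (simp add: \<kappa>_def)
        have lam0: "lam n \<ge> 0" for n using fpos[of n] by (simp add: lam_def)
        have eqn: "h n z = ennreal (\<kappa> * G (t n * lam n) / G (t n))" for n
        proof -
          have fn: "f n > 0" by (rule fpos)
          define D where "D = \<bar>u x - u (x + f n *\<^sub>R z)\<bar>"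
          have D0: "D \<ge> 0" by (simp add: D_def)
          have arg: "D / (f n * norm z) powr s = t n * lam n"
            using fn nz D0 by (simp add: t_def lam_def D_def[symmetric] powr_mult powr_diff field_simps)
          have arg0: "D / (f n * norm z) powr s \<ge> 0" using D0 by simp
          have Gt: "G (t n) > 0" using fn by (intro Gpos) (simp add: t_def)
          have V0: "G (t n * lam n) \<ge> 0" using arg arg0 by (intro Gnn) simp
          have "h n z = ennreal (\<beta> / G (t n)) * ennreal (G (t n * lam n) / norm z powr real DIM('a))"
            using True arg arg0 by (simp add: h_def G0_def D_def[symmetric])
          also have "\<dots> = ennreal (\<beta> / G (t n) * (G (t n * lam n) / norm z powr real DIM('a)))"
            using b0 Gt by (simp add: ennreal_mult'[symmetric])
          also have "\<beta> / G (t n) * (G (t n * lam n) / norm z powr real DIM('a)) = \<kappa> * G (t n * lam n) / G (t n)"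
            by (simp add: \<kappa>_def field_simps)
          finally show ?thesis .
        qed
        have \<Phi>z: "\<Phi> z = ennreal (\<kappa> * L powr p)"
          using True by (simp add: \<Phi>_def \<kappa>_def L_def \<beta>_def field_simps)
        have D: "((\<lambda>\<delta>. (u (x + \<delta> *\<^sub>R z) - u x) / \<delta>) \<longlongrightarrow> a \<bullet> z) (at 0)"
        proof -
          have d1: "((\<lambda>\<delta>::real. x + \<delta> *\<^sub>R z) has_derivative (\<lambda>h. h *\<^sub>R z)) (at 0)"
            by (auto intro!: derivative_eq_intros)
          have d2: "(u has_derivative (\<lambda>h. gradu x \<bullet> h)) (at (x + 0 *\<^sub>R z))" using assms(5)[of x] by simp
          have "((\<lambda>\<delta>. u (x + \<delta> *\<^sub>R z)) has_derivative (\<lambda>h. gradu x \<bullet> (h *\<^sub>R z))) (at 0)"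
            using has_derivative_compose[OF d1 d2] by simp
          moreover have "(\<lambda>h. gradu x \<bullet> (h *\<^sub>R z)) = (*) (a \<bullet> z)" by (rule ext) (simp add: a_def)
          ultimately have "((\<lambda>\<delta>. u (x + \<delta> *\<^sub>R z)) has_field_derivative (a \<bullet> z)) (at 0)"
            by (simp add: has_field_derivative_def)
          then show ?thesis by (simp add: has_field_derivative_iff)
        qed
        have comp: "(\<lambda>n. (u (x + f n *\<^sub>R z) - u x) / f n) \<longlonglongrightarrow> a \<bullet> z"
          using filterlim_compose[OF D flim'] by simp
        have lamlim: "lam \<longlonglongrightarrow> L"
        proof -
          have "(\<lambda>n. \<bar>(u (x + f n *\<^sub>R z) - u x) / f n\<bar> / norm z powr s) \<longlonglongrightarrow> \<bar>a \<bullet> z\<bar> / norm z powr s"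
            using comp nz by (intro tendsto_intros) auto
          moreover have "lam = (\<lambda>n. \<bar>(u (x + f n *\<^sub>R z) - u x) / f n\<bar> / norm z powr s)"
            by (rule ext) (use fpos in \<open>simp add: lam_def abs_minus_commute abs_of_pos\<close>)
          ultimately show ?thesis by (simp only: L_def)
        qed
        have "ennreal (\<kappa> * L powr p) \<le> liminf (\<lambda>n. ennreal (\<kappa> * G (t n * lam n) / G (t n)))"
          by (rule pointwise_liminf[OF Gmono Gpos rv tlim lamlim lam0 \<kappa>0 p]) auto
        then show ?thesis using \<Phi>z eqn by simp
      qed
      have "(\<integral>\<^sup>+ z. \<Phi> z \<partial>lborel) \<le> (\<integral>\<^sup>+ z. liminf (\<lambda>n. h n z) \<partial>lborel)"
        by (intro nn_integral_mono pw)
      also have "\<dots> \<le> liminf (\<lambda>n. integral\<^sup>N lborel (h n))"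
        by (rule nn_integral_liminf) simp
      also have "\<dots> = liminf (\<lambda>n. X (f n))" by (simp add: Xh)
      finally show ?thesis .
    qed
    have B: "C \<le> (\<integral>\<^sup>+ z. \<Phi> z \<partial>lborel)"
    proof -
      define e :: 'a where "e = (SOME b. b \<in> Basis)"
      have eB: "e \<in> Basis" unfolding e_def by (rule someI_ex) (use nonempty_Basis in blast)
      have ne: "norm e = 1" using eB by simp
      define b where "b = a /\<^sub>R norm a"
      have nb: "norm b = 1" using False by (simp add: b_def)
      define K where "K = K_const TYPE('a) p"
      have Kdef: "K = integral\<^sup>L (sphere_measure :: 'a measure) (\<lambda>w. \<bar>w \<bullet> e\<bar> powr p)"
        by (simp add: K_def K_const_def e_def Let_def)
      have Knn: "K \<ge> 0" unfolding Kdef by (rule integral_nonneg_AE) auto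
      have Kle: "ennreal K \<le> (\<integral>\<^sup>+ w. ennreal (\<bar>w \<bullet> e\<bar> powr p) \<partial>(sphere_measure :: 'a measure))"
      proof (cases "integrable (sphere_measure :: 'a measure) (\<lambda>w. \<bar>w \<bullet> e\<bar> powr p)")
        case True
        then show ?thesis unfolding Kdef by (subst nn_integral_eq_integral) auto
      next
        case False
        then have "K = 0" unfolding Kdef by (rule not_integrable_integral_eq)
        then show ?thesis by simp
      qed
      define J where "J = (\<integral>\<^sup>+ z. ennreal (\<bar>b \<bullet> z\<bar> powr p / norm z powr p) * indicator {0<..<1} (norm z) \<partial>lborel)"
      have sph: "(\<integral>\<^sup>+ w. ennreal (\<bar>w \<bullet> e\<bar> powr p) \<partial>(sphere_measure :: 'a measure))
          = ennreal (real DIM('a)) * (\<integral>\<^sup>+ z. ennreal (\<bar>(z /\<^sub>R norm z) \<bullet> e\<bar> powr p) * indicator {0<..1} (norm z) \<partial>lborel)"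
        by (rule sphere_nn) measurable
      also have "(\<integral>\<^sup>+ z. ennreal (\<bar>(z /\<^sub>R norm z) \<bullet> e\<bar> powr p) * indicator {0<..1} (norm z) \<partial>lborel)
          = (\<integral>\<^sup>+ z. ennreal (\<bar>e \<bullet> z\<bar> powr p / norm z powr p) * indicator {0<..1} (norm z) \<partial>lborel)"
      proof (intro nn_integral_cong)
        fix z :: 'a
        have "\<bar>(z /\<^sub>R norm z) \<bullet> e\<bar> = \<bar>e \<bullet> z\<bar> / norm z"
          by (simp add: abs_mult inner_commute divide_inverse_commute)
        then have "\<bar>(z /\<^sub>R norm z) \<bullet> e\<bar> powr p = \<bar>e \<bullet> z\<bar> powr p / norm z powr p"
          by (simp add: powr_divide)
        then show "ennreal (\<bar>(z /\<^sub>R norm z) \<bullet> e\<bar> powr p) * indicator {0<..1} (norm z) = ennreal (\<bar>e \<bullet> z\<bar> powr p / norm z powr p) * indicator {0<..1} (norm z)"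
          by simp
      qed
      also have "(\<integral>\<^sup>+ z. ennreal (\<bar>e \<bullet> z\<bar> powr p / norm z powr p) * indicator {0<..1} (norm z) \<partial>lborel)
          = (\<integral>\<^sup>+ z. ennreal (\<bar>b \<bullet> z\<bar> powr p / norm z powr p) * indicator {0<..1} (norm z) \<partial>lborel)"
        using rot_invariant[of e b p] ne nb by simp
      also have "\<dots> = J"
        unfolding J_def
      proof (rule nn_integral_cong_AE)
        show "AE z in lborel. ennreal (\<bar>b \<bullet> z\<bar> powr p / norm z powr p) * indicator {0<..1} (norm z)
            = ennreal (\<bar>b \<bullet> z\<bar> powr p / norm z powr p) * indicator {0<..<1} (norm z)"
          using AE_not_in[OF sphere_null[of 1]] by eventually_elim (auto simp: indicator_def)
      qed
      finally have KJ: "ennreal K \<le> ennreal (real DIM('a)) * J" using Kle by simp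
      have sh: "ennreal (p*(1-s) * q powr (p*(1-s)) * (1 - q ^ DIM('a)) / (1 - q powr (p*(1-s))) * norm a powr p) * J
          \<le> (\<integral>\<^sup>+ z. \<Phi> z \<partial>lborel)" if "0 < q" "q < 1" for q
        using shells[OF p s that False] unfolding J_def \<Phi>_def b_def .
      have coefpos: "p*(1-s) * q powr (p*(1-s)) * (1 - q ^ DIM('a)) / (1 - q powr (p*(1-s))) * norm a powr p > 0"
        if "0 < q" "q < 1" for q
      proof -
        have "q ^ DIM('a) < 1" using that by (simp add: power_less_one_iff)
        moreover have "q powr (p*(1-s)) < 1" using that b0 by (simp add: \<beta>_def powr01_less_one)
        ultimately show ?thesis using that b0 False by (simp add: \<beta>_def)
      qed
      show ?thesis
      proof (cases "(\<integral>\<^sup>+ z. \<Phi> z \<partial>lborel) = \<infinity>")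
        case True then show ?thesis by simp
      next
        case inf: False
        obtain i where i: "(\<integral>\<^sup>+ z. \<Phi> z \<partial>lborel) = ennreal i" "i \<ge> 0"
          using inf by (cases "(\<integral>\<^sup>+ z. \<Phi> z \<partial>lborel)") auto
        have Jfin: "J \<noteq> \<infinity>"
        proof
          assume J: "J = \<infinity>"
          define c where "c = p*(1-s) * (1/2) powr (p*(1-s)) * (1 - (1/2) ^ DIM('a)) / (1 - (1/2) powr (p*(1-s))) * norm a powr p"
          have c0: "c > 0" using coefpos[of "1/2"] by (simp add: c_def)
          have "ennreal c * J = \<infinity>" using J c0 by (simp add: ennreal_mult_top)
          then show False using sh[of "1/2"] inf unfolding c_def by (simp add: top_unique)
        qed
        obtain j where j: "J = ennreal j" "j \<ge> 0" using Jfin by (cases J) auto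
        have le: "p*(1-s) * q powr (p*(1-s)) * (1 - q ^ DIM('a)) / (1 - q powr (p*(1-s))) * norm a powr p * j \<le> i"
          if "0 < q" "q < 1" for q
          using sh[OF that] coefpos[OF that] i j by (simp add: ennreal_mult'[symmetric])
        have lim: "((\<lambda>q. p*(1-s) * q powr (p*(1-s)) * (1 - q ^ DIM('a)) / (1 - q powr (p*(1-s))) * norm a powr p * j)
            \<longlongrightarrow> real DIM('a) * norm a powr p * j) (at_left 1)"
          using coef_lim[of "p*(1-s)" "DIM('a)"] b0 unfolding \<beta>_def by (intro tendsto_intros) auto
        have ev: "eventually (\<lambda>q. p*(1-s) * q powr (p*(1-s)) * (1 - q ^ DIM('a)) / (1 - q powr (p*(1-s))) * norm a powr p * j \<le> i) (at_left (1::real))"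
          using eventually_at_left_real[of 0 1] by (rule eventually_mono) (use le in auto)
        have Nle: "real DIM('a) * norm a powr p * j \<le> i"
          by (rule tendsto_le[OF trivial_limit_at_left_real tendsto_const lim ev])
        have "K \<le> real DIM('a) * j" using KJ j by (simp add: ennreal_mult'[symmetric])
        then have "K * norm a powr p \<le> real DIM('a) * j * norm a powr p" by (simp add: mult_right_mono)
        also have "\<dots> \<le> i" using Nle by (simp add: mult_ac)
        finally show ?thesis using i by (simp add: C_def K_def ennreal_leI)
      qed
    qed
    show ?thesis
      unfolding le_Liminf_iff
    proof (intro allI impI)
      fix y assume y: "y < C"
      show "eventually (\<lambda>\<delta>. y < X \<delta>) (at_right 0)"
      proof (rule sequentially_imp_eventually_at_right[of 0 1])
        fix f :: "nat \<Rightarrow> real" assume f: "\<And>n. 0 < f n" "\<And>n. f n < 1" "decseq f" "f \<longlonglongrightarrow> 0"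
        have "y < liminf (\<lambda>n. X (f n))" using y B A[OF f(1) f(4)] by (meson order_less_le_trans)
        then show "eventually (\<lambda>n. y < X (f n)) sequentially" by (rule less_LiminfD)
      qed simp
    qed
  qed
  then show ?thesis by (simp add: X_def C_def a_def)
qed

end
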